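(* For each $2p\in\{24, 28, 32, 36, 44, 48, 52, 54\}$ there exists a cyclic DCA$(4,2p+1;2p)$ satisfying P1 and P2.
   Context: A difference covering array DCA$(k,\eta;n)$ over $\mathbb{Z}_n$ (a cyclic DCA) is an $\eta\times k$ matrix $Q=[q(i,j)]$ with entries in $\mathbb{Z}_n$ such that for every pair of distinct columns $j,j'$ the multiset $\{q(i,j)-q(i,j') : 0\le i\le \eta-1\}$ contains every element of $\mathbb{Z}_n$ at least once. A DCA$(k,n+1;n)$ is taken in normalized form: all entries of its last row (row $n$) and last column (column $k-1$) equal $0$. It satisfies P1 if $0$ occurs at least twice in every column, and P2 if for all distinct columns $j,j'$ with $j\neq k-1\neq j'$, the set $\{q(i,j)-q(i,j') : 0\le i\le n-1\}$ equals $\mathbb{Z}_n\setminus\{0\}$. *)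

theory Defs
  imports Main
begin

text \<open>An eta x k matrix over Z_n is modelled as Q :: nat => nat => int, where Q i j is
the entry in row i (i < eta) and column j (j < k); entries are representatives in {0..<n}.\<close>

definition is_DCA :: "nat \<Rightarrow> nat \<Rightarrow> nat \<Rightarrow> (nat \<Rightarrow> nat \<Rightarrow> int) \<Rightarrow> bool" where
  "is_DCA k eta n Q \<longleftrightarrow>
     (\<forall>i<eta. \<forall>j<k. 0 \<le> Q i j \<and> Q i j < int n) \<and>
     (\<forall>j<k. \<forall>j'<k. j \<noteq> j' \<longrightarrow>
        (\<forall>d::int. 0 \<le> d \<and> d < int n \<longrightarrow> (\<exists>i<eta. (Q i j - Q i j') mod int n = d)))"

definition DCA_normalized :: "nat \<Rightarrow> nat \<Rightarrow> (nat \<Rightarrow> nat \<Rightarrow> int) \<Rightarrow> bool" where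
  "DCA_normalized k n Q \<longleftrightarrow>
     (\<forall>j<k. Q n j = 0) \<and> (\<forall>i<n+1. Q i (k - 1) = 0)"

definition DCA_P1 :: "nat \<Rightarrow> nat \<Rightarrow> (nat \<Rightarrow> nat \<Rightarrow> int) \<Rightarrow> bool" where
  "DCA_P1 k n Q \<longleftrightarrow> (\<forall>j<k. 2 \<le> card {i. i < n + 1 \<and> Q i j = 0})"

definition DCA_P2 :: "nat \<Rightarrow> nat \<Rightarrow> (nat \<Rightarrow> nat \<Rightarrow> int) \<Rightarrow> bool" where
  "DCA_P2 k n Q \<longleftrightarrow>
     (\<forall>j<k. \<forall>j'<k. j \<noteq> j' \<and> j \<noteq> k - 1 \<and> j' \<noteq> k - 1 \<longrightarrow>
        (\<lambda>i. (Q i j - Q i j') mod int n) ` {..<n} = {1..<int n})"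

end

theory Submission imports Defs begin

definition Qof :: "int list \<Rightarrow> int list \<Rightarrow> nat \<Rightarrow> nat \<Rightarrow> nat \<Rightarrow> int" where
"Qof bs cs n i j = (if i < n then (if j=0 then int i else if j=1 then bs!i else if j=2 then cs!i else 0) else 0)"

definition dl :: "int list \<Rightarrow> int list \<Rightarrow> nat \<Rightarrow> nat \<Rightarrow> nat \<Rightarrow> int list" where
"dl bs cs n j j' = map (\<lambda>i. (Qof bs cs n i j - Qof bs cs n i j') mod int n) [0..<n]"

definition pairs :: "(nat \<times> nat) list" where
"pairs = [(0,1),(0,2),(1,2),(1,0),(2,0),(2,1)]"

lemma mem_idx: assumes "v \<in> set xs" obtains i where "i < length xs" "xs ! i = v"
  using assms by (metis in_set_conv_nth)

lemma col_hit:
  assumes len: "length bs = n" "length cs = n"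
    and C: "list_all (\<lambda>y. y \<in> set bs) [0..int n - 1]" "list_all (\<lambda>y. y \<in> set cs) [0..int n - 1]"
    and j: "j < 3" and v: "0 \<le> v" "v < int n"
  shows "\<exists>i<n. Qof bs cs n i j = v"
proof -
  have vin: "v \<in> set [0..int n - 1]" using v by auto
  consider "j = 0" | "j = 1" | "j = 2" using j by linarith
  then show ?thesis
  proof cases
    case 1
    then show ?thesis using v by (intro exI[of _ "nat v"]) (auto simp: Qof_def)
  next
    case 2
    have "v \<in> set bs" using C(1) vin by (simp add: list_all_iff)
    then obtain i where "i < length bs" "bs ! i = v" by (rule mem_idx)
    then show ?thesis using 2 len by (intro exI[of _ i]) (auto simp: Qof_def)
  next
    case 3
    have "v \<in> set cs" using C(2) vin by (simp add: list_all_iff)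
    then obtain i where "i < length cs" "cs ! i = v" by (rule mem_idx)
    then show ?thesis using 3 len by (intro exI[of _ i]) (auto simp: Qof_def)
  qed
qed

lemma chk:
  assumes len: "length bs = n" "length cs = n" and npos: "0 < n"
  and R: "list_all (\<lambda>x. 0 \<le> x \<and> x < int n) bs" "list_all (\<lambda>x. 0 \<le> x \<and> x < int n) cs"
  and C: "list_all (\<lambda>y. y \<in> set bs) [0..int n - 1]" "list_all (\<lambda>y. y \<in> set cs) [0..int n - 1]"
  and P: "list_all (\<lambda>(j,j'). list_all (\<lambda>x. 1 \<le> x \<and> x < int n) (dl bs cs n j j') \<and>
                 list_all (\<lambda>y. y \<in> set (dl bs cs n j j')) [1..int n - 1]) pairs"
  shows "\<exists>Q. is_DCA 4 (n + 1) n Q \<and> DCA_normalized 4 n Q \<and> DCA_P1 4 n Q \<and> DCA_P2 4 n Q"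
proof (intro exI conjI)
  let ?Q = "Qof bs cs n"
  have Pj: "list_all (\<lambda>x. 1 \<le> x \<and> x < int n) (dl bs cs n j j') \<and>
                 list_all (\<lambda>y. y \<in> set (dl bs cs n j j')) [1..int n - 1]"
    if "j < 4" "j' < 4" "j \<noteq> j'" "j \<noteq> 3" "j' \<noteq> 3" for j j'
  proof -
    have "j = 0 \<or> j = 1 \<or> j = 2" "j' = 0 \<or> j' = 1 \<or> j' = 2" using that by presburger+
    then have "(j, j') \<in> set pairs" using that(3) unfolding pairs_def by auto
    then show ?thesis using P by (auto simp: list_all_iff)
  qed
  have img: "(\<lambda>i. (?Q i j - ?Q i j') mod int n) ` {..<n} = {1..<int n}"
    if "j < 4" "j' < 4" "j \<noteq> j'" "j \<noteq> 3" "j' \<noteq> 3" for j j'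
  proof -
    have A: "(\<lambda>i. (?Q i j - ?Q i j') mod int n) ` {..<n} = set (dl bs cs n j j')"
      unfolding dl_def set_map set_upt lessThan_atLeast0 ..
    from Pj[OF that] have B1: "\<forall>x\<in>set (dl bs cs n j j'). 1 \<le> x \<and> x < int n"
      and B2: "\<forall>y\<in>set [1..int n - 1]. y \<in> set (dl bs cs n j j')" unfolding list_all_iff by blast+
    have "set (dl bs cs n j j') = {1..<int n}"
    proof
      show "set (dl bs cs n j j') \<subseteq> {1..<int n}" using B1 by auto
      show "{1..<int n} \<subseteq> set (dl bs cs n j j')"
      proof
        fix y assume "y \<in> {1..<int n}"
        then have "y \<in> set [1..int n - 1]" by simp
        then show "y \<in> set (dl bs cs n j j')" using B2 by blast
      qed
    qed
    then show ?thesis using A by simp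
  qed
  show "DCA_P2 4 n ?Q" unfolding DCA_P2_def
  proof (intro allI impI)
    fix j j' :: nat assume "j < 4" "j' < 4" "j \<noteq> j' \<and> j \<noteq> 4 - 1 \<and> j' \<noteq> 4 - 1"
    then show "(\<lambda>i. (?Q i j - ?Q i j') mod int n) ` {..<n} = {1..<int n}" by (intro img) auto
  qed
  show "DCA_normalized 4 n ?Q" by (simp add: DCA_normalized_def Qof_def)
  have hit: "\<exists>i<n. ?Q i j = v" if "j < 3" "0 \<le> v" "v < int n" for j v
    using col_hit[OF len C that] .
  show "DCA_P1 4 n ?Q" unfolding DCA_P1_def
  proof (intro allI impI)
    fix j :: nat assume j: "j < 4"
    obtain i0 where i0: "i0 < n" "?Q i0 j = 0"
    proof (cases "j = 3")
      case True then show ?thesis using that[of 0] npos by (simp add: Qof_def)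
    next
      case False then have "j < 3" using j by simp
      then show ?thesis using hit[of j 0] npos that by auto
    qed
    have "{i0, n} \<subseteq> {i. i < n + 1 \<and> ?Q i j = 0}" using i0 by (auto simp: Qof_def)
    moreover have "card {i0, n} = 2" using i0 by simp
    moreover have "finite {i. i < n + 1 \<and> ?Q i j = 0}" by simp
    ultimately show "2 \<le> card {i. i < n + 1 \<and> ?Q i j = 0}"
      by (metis card_mono)
  qed
  show "is_DCA 4 (n + 1) n ?Q" unfolding is_DCA_def
  proof (rule conjI; intro allI impI)
    fix i j assume i: "i < n + 1" and j: "j < (4::nat)"
    have rb: "\<forall>x\<in>set bs. 0 \<le> x \<and> x < int n" "\<forall>x\<in>set cs. 0 \<le> x \<and> x < int n"
      using R by (auto simp: list_all_iff)
    show "0 \<le> ?Q i j \<and> ?Q i j < int n"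
    proof (cases "i < n")
      case True
      then have "bs ! i \<in> set bs" "cs ! i \<in> set cs" using len by auto
      then show ?thesis using rb True npos by (auto simp: Qof_def)
    next
      case False then show ?thesis using npos by (simp add: Qof_def)
    qed
  next
    fix j j' :: nat and d :: int
    assume j: "j < 4" and j': "j' < 4" and jj: "j \<noteq> j'" and d: "0 \<le> d \<and> d < int n"
    show "\<exists>i<n + 1. (?Q i j - ?Q i j') mod int n = d"
    proof (cases "d = 0")
      case True then show ?thesis by (intro exI[of _ n]) (simp add: Qof_def)
    next
      case False
      then have d1: "1 \<le> d" "d < int n" using d by auto
      show ?thesis
      proof (cases "j = 3")
        case True
        then have j'3: "j' < 3" using j' jj by simp
        obtain i where "i < n" "?Q i j' = int n - d" using hit[OF j'3, of "int n - d"] d1 by auto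
        moreover have "(0 - (int n - d)) mod int n = d"
        proof -
          have "(0 - (int n - d)) = d + (-1) * int n" by simp
          then have "(0 - (int n - d)) mod int n = d mod int n" by (metis mod_mult_self1)
          then show ?thesis using d1 by simp
        qed
        ultimately show ?thesis using True by (intro exI[of _ i]) (simp add: Qof_def)
      next
        case False
        then have j3: "j < 3" using j by simp
        show ?thesis
        proof (cases "j' = 3")
          case True
          obtain i where "i < n" "?Q i j = d" using hit[OF j3, of d] d1 by auto
          then show ?thesis using True d1 by (intro exI[of _ i]) (simp add: Qof_def)
        next
          case False
          have "d \<in> (\<lambda>i. (?Q i j - ?Q i j') mod int n) ` {..<n}"
            using img[OF j j' jj] \<open>j \<noteq> 3\<close> False d1 by auto
          then obtain i where "i < n" "(?Q i j - ?Q i j') mod int n = d" by auto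
          then show ?thesis by (intro exI[of _ i]) auto
        qed
      qed
    qed
  qed
qed

theorem mainTheorem16:
  shows "\<forall>n \<in> {24, 28, 32, 36, 44, 48, 52, 54::nat}.
           \<exists>Q. is_DCA 4 (n + 1) n Q \<and> DCA_normalized 4 n Q \<and> DCA_P1 4 n Q \<and> DCA_P2 4 n Q"
proof -
  have t24: "\<exists>Q. is_DCA 4 (24 + 1) 24 Q \<and> DCA_normalized 4 24 Q \<and> DCA_P1 4 24 Q \<and> DCA_P2 4 24 Q"
    apply (rule chk[where bs="[23, 16, 19, 7, 13, 1, 18, 15, 21, 10, 22, 8, 6, 5, 12, 17, 2, 20, 0, 14, 3, 11, 9, 4]"
     and cs="[1, 20, 18, 0, 10, 17, 19, 22, 12, 23, 9, 13, 15, 11, 8, 3, 21, 4, 14, 2, 6, 5, 7, 16]"])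
    by code_simp+
  have t28: "\<exists>Q. is_DCA 4 (28 + 1) 28 Q \<and> DCA_normalized 4 28 Q \<and> DCA_P1 4 28 Q \<and> DCA_P2 4 28 Q"
    apply (rule chk[where bs="[13, 19, 24, 9, 16, 2, 25, 12, 6, 17, 21, 4, 22, 27, 3, 14, 18, 5, 10, 20, 15, 8, 1, 26, 0, 11, 7, 23]"
     and cs="[14, 18, 22, 13, 10, 19, 11, 26, 9, 4, 23, 15, 0, 7, 16, 24, 6, 1, 5, 12, 27, 17, 20, 3, 21, 8, 25, 2]"])
    by code_simp+
  have t32: "\<exists>Q. is_DCA 4 (32 + 1) 32 Q \<and> DCA_normalized 4 32 Q \<and> DCA_P1 4 32 Q \<and> DCA_P2 4 32 Q"
    apply (rule chk[where bs="[2, 18, 16, 13, 20, 28, 27, 10, 5, 22, 26, 15, 30, 9, 6, 14, 25, 29, 11, 24, 3, 8, 12, 17, 0, 23, 21, 1, 7, 4, 31, 19]"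
     and cs="[29, 16, 8, 25, 28, 18, 1, 27, 2, 11, 31, 14, 17, 22, 21, 0, 26, 13, 4, 12, 7, 19, 6, 24, 23, 5, 30, 3, 10, 20, 9, 15]"])
    by code_simp+
  have t36: "\<exists>Q. is_DCA 4 (36 + 1) 36 Q \<and> DCA_normalized 4 36 Q \<and> DCA_P1 4 36 Q \<and> DCA_P2 4 36 Q"
    apply (rule chk[where bs="[13, 24, 27, 35, 1, 16, 20, 11, 26, 30, 29, 28, 21, 31, 8, 5, 15, 18, 4, 17, 22, 12, 10, 3, 19, 32, 0, 33, 7, 34, 14, 23, 25, 9, 6, 2]"
     and cs="[7, 20, 25, 24, 8, 1, 12, 6, 32, 29, 11, 2, 5, 22, 19, 18, 34, 27, 30, 35, 10, 16, 33, 15, 21, 4, 3, 13, 0, 31, 28, 9, 26, 14, 23, 17]"])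
    by code_simp+
  have t44: "\<exists>Q. is_DCA 4 (44 + 1) 44 Q \<and> DCA_normalized 4 44 Q \<and> DCA_P1 4 44 Q \<and> DCA_P2 4 44 Q"
    apply (rule chk[where bs="[41, 32, 14, 39, 22, 34, 43, 28, 4, 15, 19, 21, 35, 17, 40, 9, 36, 18, 20, 7, 0, 38, 3, 26, 31, 30, 16, 10, 6, 1, 25, 42, 2, 24, 12, 33, 11, 23, 37, 8, 29, 5, 13, 27]"
     and cs="[13, 30, 26, 42, 19, 16, 10, 37, 34, 36, 2, 14, 6, 1, 3, 29, 0, 40, 25, 24, 22, 8, 28, 32, 20, 43, 17, 5, 38, 41, 27, 21, 33, 9, 11, 7, 35, 15, 31, 12, 4, 39, 23, 18]"])
    by code_simp+
  have t48: "\<exists>Q. is_DCA 4 (48 + 1) 48 Q \<and> DCA_normalized 4 48 Q \<and> DCA_P1 4 48 Q \<and> DCA_P2 4 48 Q"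
    apply (rule chk[where bs="[32, 14, 6, 45, 37, 35, 31, 2, 16, 18, 9, 38, 17, 11, 42, 30, 40, 36, 44, 39, 1, 27, 15, 12, 0, 28, 43, 34, 19, 26, 20, 4, 24, 47, 22, 5, 23, 33, 13, 41, 8, 3, 25, 29, 7, 46, 10, 21]"
     and cs="[24, 20, 41, 7, 26, 23, 13, 44, 40, 29, 22, 28, 14, 42, 47, 11, 8, 3, 45, 12, 35, 1, 10, 21, 32, 19, 9, 30, 38, 4, 27, 37, 0, 46, 39, 17, 2, 36, 15, 34, 16, 31, 43, 6, 5, 18, 33, 25]"])
    by code_simp+
  have t52: "\<exists>Q. is_DCA 4 (52 + 1) 52 Q \<and> DCA_normalized 4 52 Q \<and> DCA_P1 4 52 Q \<and> DCA_P2 4 52 Q"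
    apply (rule chk[where bs="[9, 30, 49, 34, 24, 46, 38, 1, 5, 22, 37, 12, 23, 11, 51, 27, 20, 43, 33, 41, 25, 14, 10, 29, 16, 15, 4, 50, 45, 13, 48, 7, 28, 2, 44, 8, 39, 19, 0, 47, 42, 40, 6, 26, 35, 17, 32, 21, 3, 36, 31, 18]"
     and cs="[10, 0, 23, 19, 17, 32, 21, 13, 48, 43, 18, 39, 26, 9, 1, 46, 45, 6, 22, 49, 12, 2, 16, 42, 27, 5, 51, 28, 50, 47, 14, 33, 44, 30, 41, 40, 7, 11, 29, 4, 38, 24, 37, 36, 34, 31, 3, 15, 20, 8, 35, 25]"])
    by code_simp+
  have t54: "\<exists>Q. is_DCA 4 (54 + 1) 54 Q \<and> DCA_normalized 4 54 Q \<and> DCA_P1 4 54 Q \<and> DCA_P2 4 54 Q"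
    apply (rule chk[where bs="[22, 21, 27, 8, 13, 4, 0, 51, 14, 46, 17, 47, 52, 5, 3, 43, 40, 30, 33, 15, 31, 37, 6, 50, 12, 44, 11, 35, 23, 20, 10, 29, 42, 45, 36, 2, 53, 1, 7, 32, 41, 16, 39, 19, 48, 18, 49, 26, 25, 9, 28, 38, 24, 34]"
     and cs="[6, 37, 35, 14, 5, 13, 22, 38, 3, 49, 30, 26, 24, 4, 8, 19, 41, 10, 45, 43, 29, 1, 0, 28, 52, 48, 47, 2, 50, 31, 17, 20, 39, 18, 53, 27, 34, 21, 51, 42, 16, 40, 32, 15, 25, 33, 9, 11, 44, 46, 23, 7, 12, 36]"])
    by code_simp+
  show ?thesis using t24 t28 t32 t36 t44 t48 t52 t54 by simp
qed

end
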